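(* Let $p:Y\to Z$ be a quandle covering and $p_*:\mathrm{As}(Y)\to\mathrm{As}(Z)$ the induced surjection ($e_y\mapsto e_{p(y)}$). Then $p_*$ is a central extension. Moreover, if $Y$ and $Z$ are connected and $Z$ is of type $t_Z<\infty$, then $\mathrm{Ker}(p_* )$ is annihilated by $t_Z$.
   Context: A quandle is a set $X$ with a binary operation $\lhd$ such that $a\lhd a=a$, each $x\mapsto x\lhd a$ is bijective, and $(a\lhd b)\lhd c=(a\lhd c)\lhd(b\lhd c)$. A quandle homomorphism $f$ satisfies $f(a\lhd b)=f(a)\lhd f(b)$. A quandle covering is a surjective quandle homomorphism $p:Y\to Z$ such that $p(\tilde x)=p(\tilde y)$ implies $\tilde a\lhd\tilde x=\tilde a\lhd\tilde y$ for all $\tilde a,\tilde x,\tilde y\in Y$. The adjoint group $\mathrm{As}(X)$ has generators $e_x$ and relations $e_{x\lhd y}=e_y^{-1}e_xe_y$; it acts on $X$ by $x\cdot e_y=x\lhd y$, and $X$ is connected if this action is transitive. The type $t_Z$ is the smallest positive $N$ with $x\lhd^N y=x$ for all $x,y\in Z$ ($N$-fold application of $\bullet\lhd y$). *)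

theory Defs
  imports "HOL-Algebra.Coset"
begin

definition quandle :: "'a set \<Rightarrow> ('a \<Rightarrow> 'a \<Rightarrow> 'a) \<Rightarrow> bool" where
  "quandle X op \<longleftrightarrow>
     (\<forall>a\<in>X. \<forall>b\<in>X. op a b \<in> X) \<and>
     (\<forall>a\<in>X. op a a = a) \<and>
     (\<forall>a\<in>X. bij_betw (\<lambda>x. op x a) X X) \<and>
     (\<forall>a\<in>X. \<forall>b\<in>X. \<forall>c\<in>X. op (op a b) c = op (op a c) (op b c))"

definition quandle_hom ::
  "'a set \<Rightarrow> ('a \<Rightarrow> 'a \<Rightarrow> 'a) \<Rightarrow> 'b set \<Rightarrow> ('b \<Rightarrow> 'b \<Rightarrow> 'b) \<Rightarrow> ('a \<Rightarrow> 'b) \<Rightarrow> bool" where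
  "quandle_hom X opX Y opY f \<longleftrightarrow>
     (\<forall>x\<in>X. f x \<in> Y) \<and> (\<forall>a\<in>X. \<forall>b\<in>X. f (opX a b) = opY (f a) (f b))"

definition quandle_covering ::
  "'a set \<Rightarrow> ('a \<Rightarrow> 'a \<Rightarrow> 'a) \<Rightarrow> 'b set \<Rightarrow> ('b \<Rightarrow> 'b \<Rightarrow> 'b) \<Rightarrow> ('a \<Rightarrow> 'b) \<Rightarrow> bool" where
  "quandle_covering Y opY Z opZ p \<longleftrightarrow>
     quandle Y opY \<and> quandle Z opZ \<and> quandle_hom Y opY Z opZ p \<and> p ` Y = Z \<and>
     (\<forall>a\<in>Y. \<forall>x\<in>Y. \<forall>y\<in>Y. p x = p y \<longrightarrow> opY a x = opY a y)"

text \<open>Words in the generators e_x and their inverses: a letter (x, True) stands for e_x,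
  (x, False) for e_x^-1.  As(X) is the set of words over X modulo the congruence generated by
  free cancellation and the relations e_(x \<lhd> y) = e_y^-1 e_x e_y.\<close>

type_synonym 'a word = "('a \<times> bool) list"

definition words :: "'a set \<Rightarrow> 'a word set" where
  "words X = {w. \<forall>l\<in>set w. fst l \<in> X}"

inductive as_eq :: "'a set \<Rightarrow> ('a \<Rightarrow> 'a \<Rightarrow> 'a) \<Rightarrow> 'a word \<Rightarrow> 'a word \<Rightarrow> bool"
  for X op where
  as_refl: "w \<in> words X \<Longrightarrow> as_eq X op w w"
| as_sym: "as_eq X op u v \<Longrightarrow> as_eq X op v u"
| as_trans: "as_eq X op u v \<Longrightarrow> as_eq X op v w \<Longrightarrow> as_eq X op u w"
| as_cancel: "u \<in> words X \<Longrightarrow> v \<in> words X \<Longrightarrow> x \<in> X \<Longrightarrow>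
     as_eq X op (u @ [(x, b), (x, \<not> b)] @ v) (u @ v)"
| as_rel: "u \<in> words X \<Longrightarrow> v \<in> words X \<Longrightarrow> x \<in> X \<Longrightarrow> y \<in> X \<Longrightarrow>
     as_eq X op (u @ [(op x y, True)] @ v) (u @ [(y, False), (x, True), (y, True)] @ v)"

definition as_rel_set :: "'a set \<Rightarrow> ('a \<Rightarrow> 'a \<Rightarrow> 'a) \<Rightarrow> ('a word \<times> 'a word) set" where
  "as_rel_set X op = {(u, v). as_eq X op u v}"

definition As :: "'a set \<Rightarrow> ('a \<Rightarrow> 'a \<Rightarrow> 'a) \<Rightarrow> 'a word set monoid" where
  "As X op =
    \<lparr> carrier = words X // as_rel_set X op,
      mult = (\<lambda>A B. \<Union>a\<in>A. \<Union>b\<in>B. as_rel_set X op `` {a @ b}),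
      one = as_rel_set X op `` {[]} \<rparr>"

definition as_gen :: "'a set \<Rightarrow> ('a \<Rightarrow> 'a \<Rightarrow> 'a) \<Rightarrow> 'a \<Rightarrow> 'a word set" where
  "as_gen X op x = as_rel_set X op `` {[(x, True)]}"

definition as_induced ::
  "'a set \<Rightarrow> ('a \<Rightarrow> 'a \<Rightarrow> 'a) \<Rightarrow> 'b set \<Rightarrow> ('b \<Rightarrow> 'b \<Rightarrow> 'b) \<Rightarrow> ('a \<Rightarrow> 'b)
     \<Rightarrow> 'a word set \<Rightarrow> 'b word set" where
  "as_induced Y opY Z opZ p A = (\<Union>a\<in>A. as_rel_set Z opZ `` {map (\<lambda>(y, b). (p y, b)) a})"

fun act_word :: "'a set \<Rightarrow> ('a \<Rightarrow> 'a \<Rightarrow> 'a) \<Rightarrow> 'a \<Rightarrow> 'a word \<Rightarrow> 'a" where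
  "act_word X op x [] = x"
| "act_word X op x ((y, True) # w) = act_word X op (op x y) w"
| "act_word X op x ((y, False) # w) = act_word X op (inv_into X (\<lambda>z. op z y) x) w"

definition as_act :: "'a set \<Rightarrow> ('a \<Rightarrow> 'a \<Rightarrow> 'a) \<Rightarrow> 'a \<Rightarrow> 'a word set \<Rightarrow> 'a" where
  "as_act X op x g = act_word X op x (SOME w. w \<in> g)"

definition quandle_connected :: "'a set \<Rightarrow> ('a \<Rightarrow> 'a \<Rightarrow> 'a) \<Rightarrow> bool" where
  "quandle_connected X op \<longleftrightarrow> (\<forall>x\<in>X. \<forall>y\<in>X. \<exists>g\<in>carrier (As X op). as_act X op x g = y)"

definition has_finite_type :: "'a set \<Rightarrow> ('a \<Rightarrow> 'a \<Rightarrow> 'a) \<Rightarrow> bool" where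
  "has_finite_type X op \<longleftrightarrow> (\<exists>N>0. \<forall>x\<in>X. \<forall>y\<in>X. ((\<lambda>z. op z y) ^^ N) x = x)"

definition quandle_type :: "'a set \<Rightarrow> ('a \<Rightarrow> 'a \<Rightarrow> 'a) \<Rightarrow> nat" where
  "quandle_type X op = (LEAST N. N > 0 \<and> (\<forall>x\<in>X. \<forall>y\<in>X. ((\<lambda>z. op z y) ^^ N) x = x))"

definition central_extension ::
  "('a, 'm) monoid_scheme \<Rightarrow> ('b, 'n) monoid_scheme \<Rightarrow> ('a \<Rightarrow> 'b) \<Rightarrow> bool" where
  "central_extension G H f \<longleftrightarrow>
     group G \<and> group H \<and> f \<in> hom G H \<and> f ` carrier G = carrier H \<and>
     (\<forall>k\<in>kernel G H f. \<forall>g\<in>carrier G. k \<otimes>\<^bsub>G\<^esub> g = g \<otimes>\<^bsub>G\<^esub> k)"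

end

theory Submission
  imports Defs
begin


definition cls :: "'a set \<Rightarrow> ('a \<Rightarrow> 'a \<Rightarrow> 'a) \<Rightarrow> 'a word \<Rightarrow> 'a word set" where
  "cls X op w = as_rel_set X op `` {w}"

definition invw :: "'a word \<Rightarrow> 'a word" where
  "invw w = rev (map (\<lambda>(x,b). (x, \<not> b)) w)"

lemma words_append[simp]: "u @ v \<in> words X \<longleftrightarrow> u \<in> words X \<and> v \<in> words X"
  by (auto simp: words_def)
lemma words_Cons[simp]: "l # v \<in> words X \<longleftrightarrow> fst l \<in> X \<and> v \<in> words X"
  by (auto simp: words_def)
lemma words_Nil[simp]: "[] \<in> words X"
  by (auto simp: words_def)
lemma invw_words[simp]: "invw w \<in> words X \<longleftrightarrow> w \<in> words X"
  by (auto simp: words_def invw_def)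
lemma invw_invw[simp]: "invw (invw w) = w"
  by (induct w) (auto simp: invw_def)
lemma invw_Cons: "invw (l # w) = invw w @ [(fst l, \<not> snd l)]"
  by (cases l) (auto simp: invw_def)
lemma invw_Nil[simp]: "invw [] = []" by (simp add: invw_def)

lemma as_eq_words:
  assumes cl: "\<forall>a\<in>X. \<forall>b\<in>X. op a b \<in> X"
  shows "as_eq X op u v \<Longrightarrow> u \<in> words X \<and> v \<in> words X"
  by (induct rule: as_eq.induct) (auto simp: cl)

lemma as_eq_ctxt:
  "as_eq X op u v \<Longrightarrow> a \<in> words X \<Longrightarrow> b \<in> words X \<Longrightarrow> as_eq X op (a @ u @ b) (a @ v @ b)"
proof (induct rule: as_eq.induct)
  case (as_refl w) then show ?case by (auto intro: as_eq.as_refl)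
next
  case (as_sym u v) then show ?case by (auto intro: as_eq.as_sym)
next
  case (as_trans u v w) then show ?case by (auto intro: as_eq.as_trans)
next
  case (as_cancel u v x c)
  then show ?case using as_eq.as_cancel[of "a@u" X "v@b" x op c] by simp
next
  case (as_rel u v x y)
  then show ?case using as_eq.as_rel[of "a@u" X "v@b" x y op] by simp
qed

lemma as_eq_app:
  assumes "as_eq X op u u'" "as_eq X op v v'" "u \<in> words X" "v' \<in> words X"
  shows "as_eq X op (u @ v) (u' @ v')"
proof -
  have "as_eq X op ([] @ u @ v') ([] @ u' @ v')" using as_eq_ctxt[OF assms(1), where a="[]" and b=v'] assms by simp
  moreover have "as_eq X op (u @ v @ []) (u @ v' @ [])" using as_eq_ctxt[OF assms(2), where a=u and b="[]"] assms by simp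
  ultimately show ?thesis by (auto intro: as_eq.as_trans)
qed

lemma invw_cancel: "w \<in> words X \<Longrightarrow> as_eq X op (w @ invw w) []"
proof (induct w)
  case Nil then show ?case by (auto intro: as_refl)
next
  case (Cons l w)
  obtain x c where l: "l = (x,c)" by (cases l)
  have 1: "as_eq X op ([(x,c)] @ (w @ invw w) @ [(x, \<not> c)]) ([(x,c)] @ [] @ [(x, \<not> c)])"
    using as_eq_ctxt[where u="w @ invw w" and v="[]" and a="[(x,c)]" and b="[(x, \<not> c)]"] Cons l by simp
  have 2: "as_eq X op ([] @ [(x,c),(x,\<not>c)] @ []) ([] @ [])"
    using Cons(2) l by (intro as_eq.as_cancel) auto
  show ?case using as_eq.as_trans[OF 1] 2 l by (simp add: invw_Cons)
qed

context
  fixes X :: "'a set" and op :: "'a \<Rightarrow> 'a \<Rightarrow> 'a"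
  assumes cl: "\<forall>a\<in>X. \<forall>b\<in>X. op a b \<in> X"
begin

lemma equiv_as: "equiv (words X) (as_rel_set X op)"
  unfolding equiv_def refl_on_def sym_def trans_def as_rel_set_def
  using as_eq_words[OF cl] by (auto intro: as_eq.intros)

lemma mem_cls: "a \<in> cls X op w \<longleftrightarrow> as_eq X op w a"
  by (simp add: cls_def as_rel_set_def)

lemma cls_eq: "u \<in> words X \<Longrightarrow> w \<in> words X \<Longrightarrow> cls X op u = cls X op w \<longleftrightarrow> as_eq X op u w"
  unfolding cls_def using equiv_class_eq_iff[OF equiv_as, of u w]
  by (auto simp: as_rel_set_def)

lemma carrier_As: "carrier (As X op) = cls X op ` words X"
  by (auto simp: As_def quotient_def cls_def)

lemma one_As: "\<one>\<^bsub>As X op\<^esub> = cls X op []"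
  by (simp add: As_def cls_def)

lemma mult_As: "u \<in> words X \<Longrightarrow> v \<in> words X \<Longrightarrow>
   cls X op u \<otimes>\<^bsub>As X op\<^esub> cls X op v = cls X op (u @ v)"
proof -
  assume u: "u \<in> words X" and v: "v \<in> words X"
  have "(\<Union>a\<in>cls X op u. \<Union>b\<in>cls X op v. cls X op (a @ b)) = cls X op (u @ v)"
  proof (intro equalityI subsetI)
    fix z assume "z \<in> (\<Union>a\<in>cls X op u. \<Union>b\<in>cls X op v. cls X op (a @ b))"
    then obtain a b where a: "as_eq X op u a" and b: "as_eq X op v b" and z: "as_eq X op (a@b) z"
      by (auto simp: mem_cls)
    have "as_eq X op (u @ v) (a @ b)" using as_eq_app[OF a b] u as_eq_words[OF cl b] by simp
    then show "z \<in> cls X op (u @ v)" using z by (auto simp: mem_cls intro: as_trans)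
  next
    fix z assume "z \<in> cls X op (u @ v)"
    moreover have "u \<in> cls X op u" "v \<in> cls X op v" using u v by (auto simp: mem_cls intro: as_refl)
    ultimately show "z \<in> (\<Union>a\<in>cls X op u. \<Union>b\<in>cls X op v. cls X op (a @ b))" by blast
  qed
  then show ?thesis by (simp add: As_def cls_def)
qed

lemma group_As: "group (As X op)"
proof (rule groupI)
  fix x y assume "x \<in> carrier (As X op)" "y \<in> carrier (As X op)"
  then show "x \<otimes>\<^bsub>As X op\<^esub> y \<in> carrier (As X op)"
    by (auto simp: carrier_As mult_As)
next
  show "\<one>\<^bsub>As X op\<^esub> \<in> carrier (As X op)" by (auto simp: carrier_As one_As)
next
  fix x y z assume "x \<in> carrier (As X op)" "y \<in> carrier (As X op)" "z \<in> carrier (As X op)"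
  then show "x \<otimes>\<^bsub>As X op\<^esub> y \<otimes>\<^bsub>As X op\<^esub> z = x \<otimes>\<^bsub>As X op\<^esub> (y \<otimes>\<^bsub>As X op\<^esub> z)"
    by (auto simp: carrier_As mult_As)
next
  fix x assume "x \<in> carrier (As X op)"
  then show "\<one>\<^bsub>As X op\<^esub> \<otimes>\<^bsub>As X op\<^esub> x = x"
    by (auto simp: carrier_As mult_As one_As)
next
  fix x assume "x \<in> carrier (As X op)"
  then obtain w where w: "w \<in> words X" "x = cls X op w" by (auto simp: carrier_As)
  have "cls X op (invw w @ w) = cls X op []"
    using cls_eq invw_cancel[of "invw w" X op] w by simp
  then show "\<exists>y\<in>carrier (As X op). y \<otimes>\<^bsub>As X op\<^esub> x = \<one>\<^bsub>As X op\<^esub>"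
    using w by (auto simp: carrier_As mult_As one_As intro!: bexI[of _ "cls X op (invw w)"])
qed

lemma inv_As: "w \<in> words X \<Longrightarrow> inv\<^bsub>As X op\<^esub> (cls X op w) = cls X op (invw w)"
proof -
  assume w: "w \<in> words X"
  interpret group "As X op" by (rule group_As)
  have "cls X op (invw w) \<otimes>\<^bsub>As X op\<^esub> cls X op w = \<one>\<^bsub>As X op\<^esub>"
    using cls_eq invw_cancel[of "invw w" X op] w by (simp add: mult_As one_As)
  then show ?thesis using w by (intro inv_equality) (auto simp: carrier_As) 
qed

end



lemma quandle_cl: "quandle X op \<Longrightarrow> \<forall>a\<in>X. \<forall>b\<in>X. op a b \<in> X"
  by (simp add: quandle_def)

locale asq =
  fixes X :: "'a set" and op :: "'a \<Rightarrow> 'a \<Rightarrow> 'a"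
  assumes q: "quandle X op"
begin

abbreviation "G \<equiv> As X op"
abbreviation "e x \<equiv> cls X op [(x, True)]"

lemma cl: "\<forall>a\<in>X. \<forall>b\<in>X. op a b \<in> X" using q by (simp add: quandle_def)

sublocale G: group G by (rule group_As[OF cl])

lemma carrier: "carrier G = cls X op ` words X" by (rule carrier_As[OF cl])
lemma mult: "u \<in> words X \<Longrightarrow> v \<in> words X \<Longrightarrow> cls X op u \<otimes>\<^bsub>G\<^esub> cls X op v = cls X op (u @ v)"
  by (rule mult_As[OF cl])
lemma one: "\<one>\<^bsub>G\<^esub> = cls X op []" by (rule one_As[OF cl])
lemma inv: "w \<in> words X \<Longrightarrow> inv\<^bsub>G\<^esub> (cls X op w) = cls X op (invw w)"
  by (rule inv_As[OF cl])
lemma eq: "u \<in> words X \<Longrightarrow> w \<in> words X \<Longrightarrow> cls X op u = cls X op w \<longleftrightarrow> as_eq X op u w"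
  by (rule cls_eq[OF cl])

lemma cancel1[simp]: "a \<in> carrier G \<Longrightarrow> b \<in> carrier G \<Longrightarrow> a \<otimes>\<^bsub>G\<^esub> (inv\<^bsub>G\<^esub> a \<otimes>\<^bsub>G\<^esub> b) = b"
  by (simp add: G.m_assoc[symmetric])
lemma cancel2[simp]: "a \<in> carrier G \<Longrightarrow> b \<in> carrier G \<Longrightarrow> inv\<^bsub>G\<^esub> a \<otimes>\<^bsub>G\<^esub> (a \<otimes>\<^bsub>G\<^esub> b) = b"
  by (simp add: G.m_assoc[symmetric])

lemma cls_carrier[simp]: "w \<in> words X \<Longrightarrow> cls X op w \<in> carrier G"
  by (simp add: carrier)

lemma e_carrier[simp]: "x \<in> X \<Longrightarrow> e x \<in> carrier G"
  by simp

lemma cls_Cons: "fst l \<in> X \<Longrightarrow> w \<in> words X \<Longrightarrow> cls X op (l # w) = cls X op [l] \<otimes>\<^bsub>G\<^esub> cls X op w"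
  using mult[of "[l]" w] by simp

lemma cls_False: "x \<in> X \<Longrightarrow> cls X op [(x, False)] = inv\<^bsub>G\<^esub> e x"
  using inv[of "[(x,True)]"] by (simp add: invw_def)

lemma rel: "x \<in> X \<Longrightarrow> y \<in> X \<Longrightarrow>
  inv\<^bsub>G\<^esub> e y \<otimes>\<^bsub>G\<^esub> e x \<otimes>\<^bsub>G\<^esub> e y = e (op x y)"
proof -
  assume x: "x \<in> X" and y: "y \<in> X"
  have "as_eq X op ([] @ [(op x y, True)] @ []) ([] @ [(y, False), (x, True), (y, True)] @ [])"
    using x y by (intro as_eq.as_rel) auto
  then have "e (op x y) = cls X op [(y, False), (x, True), (y, True)]"
    using x y cl by (subst eq) auto
  also have "\<dots> = inv\<^bsub>G\<^esub> e y \<otimes>\<^bsub>G\<^esub> e x \<otimes>\<^bsub>G\<^esub> e y"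
    using x y by (simp add: cls_Cons[of _ "[(x,True),(y,True)]"] cls_Cons[of _ "[(y,True)]"] cls_False G.m_assoc)
  finally show ?thesis by simp
qed

lemma words_induct[consumes 1, case_names Nil T F]:
  assumes "w \<in> words X" "P []"
    "\<And>x w. x \<in> X \<Longrightarrow> w \<in> words X \<Longrightarrow> P w \<Longrightarrow> P ((x,True) # w)"
    "\<And>x w. x \<in> X \<Longrightarrow> w \<in> words X \<Longrightarrow> P w \<Longrightarrow> P ((x,False) # w)"
  shows "P w"
  using assms(1)
proof (induct w)
  case Nil then show ?case using assms(2) by simp
next
  case (Cons l w)
  obtain x c where l: "l = (x,c)" by (cases l)
  then show ?case using Cons assms(3,4) by (cases c) auto
qed

definition central :: "'a word set \<Rightarrow> bool" where
  "central c \<longleftrightarrow> c \<in> carrier G \<and> (\<forall>g\<in>carrier G. c \<otimes>\<^bsub>G\<^esub> g = g \<otimes>\<^bsub>G\<^esub> c)"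

lemma central_gen:
  assumes c: "c \<in> carrier G" and gen: "\<And>x. x \<in> X \<Longrightarrow> c \<otimes>\<^bsub>G\<^esub> e x = e x \<otimes>\<^bsub>G\<^esub> c"
  shows "central c"
proof -
  have "c \<otimes>\<^bsub>G\<^esub> cls X op w = cls X op w \<otimes>\<^bsub>G\<^esub> c" if w: "w \<in> words X" for w
    using w
  proof (induct rule: words_induct)
    case Nil then show ?case using c by (simp add: one[symmetric])
  next
    case (T x w)
    have "c \<otimes>\<^bsub>G\<^esub> cls X op ((x,True)#w) = c \<otimes>\<^bsub>G\<^esub> e x \<otimes>\<^bsub>G\<^esub> cls X op w"
      using T c by (simp add: cls_Cons[of _ w] G.m_assoc)
    also have "\<dots> = e x \<otimes>\<^bsub>G\<^esub> (c \<otimes>\<^bsub>G\<^esub> cls X op w)" using T c gen by (simp add: G.m_assoc)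
    also have "\<dots> = cls X op ((x,True)#w) \<otimes>\<^bsub>G\<^esub> c" using T c by (simp add: cls_Cons[of _ w] G.m_assoc)
    finally show ?case .
  next
    case (F x w)
    have ci: "c \<otimes>\<^bsub>G\<^esub> inv\<^bsub>G\<^esub> e x = inv\<^bsub>G\<^esub> e x \<otimes>\<^bsub>G\<^esub> c"
    proof -
      have ex: "e x \<in> carrier G" using F by simp
      have "c \<otimes>\<^bsub>G\<^esub> inv\<^bsub>G\<^esub> e x = inv\<^bsub>G\<^esub> e x \<otimes>\<^bsub>G\<^esub> (e x \<otimes>\<^bsub>G\<^esub> c) \<otimes>\<^bsub>G\<^esub> inv\<^bsub>G\<^esub> e x"
        using ex c by (simp add: G.m_assoc[symmetric])
      also have "\<dots> = inv\<^bsub>G\<^esub> e x \<otimes>\<^bsub>G\<^esub> c" using gen[OF F(1), symmetric] ex c by (simp add: G.m_assoc)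
      finally show ?thesis .
    qed
    have "c \<otimes>\<^bsub>G\<^esub> cls X op ((x,False)#w) = c \<otimes>\<^bsub>G\<^esub> inv\<^bsub>G\<^esub> e x \<otimes>\<^bsub>G\<^esub> cls X op w"
      using F c by (simp add: cls_Cons[of _ w] cls_False G.m_assoc)
    also have "\<dots> = inv\<^bsub>G\<^esub> e x \<otimes>\<^bsub>G\<^esub> (c \<otimes>\<^bsub>G\<^esub> cls X op w)" using F c ci by (simp add: G.m_assoc)
    also have "\<dots> = cls X op ((x,False)#w) \<otimes>\<^bsub>G\<^esub> c" using F c by (simp add: cls_Cons[of _ w] cls_False G.m_assoc)
    finally show ?case .
  qed
  then show ?thesis using c by (auto simp: central_def carrier)
qed

lemma bij: "a \<in> X \<Longrightarrow> bij_betw (\<lambda>x. op x a) X X" using q by (simp add: quandle_def)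

lemma rinv_in: "a \<in> X \<Longrightarrow> x \<in> X \<Longrightarrow> inv_into X (\<lambda>z. op z a) x \<in> X"
  using bij[of a] by (metis bij_betw_imp_surj_on inv_into_into)

lemma rinv_op: "a \<in> X \<Longrightarrow> x \<in> X \<Longrightarrow> op (inv_into X (\<lambda>z. op z a) x) a = x"
  using bij[of a] by (metis bij_betw_imp_surj_on f_inv_into_f)

lemma act_in: "w \<in> words X \<Longrightarrow> y \<in> X \<Longrightarrow> act_word X op y w \<in> X"
proof (induct w arbitrary: y rule: words_induct)
  case Nil then show ?case by simp
next
  case (T x w) then show ?case using cl by simp
next
  case (F x w) then show ?case using rinv_in by simp
qed

lemma central_inv: "central c \<Longrightarrow> central (inv\<^bsub>G\<^esub> c)"
  unfolding central_def by (metis G.inv_closed G.inv_comm G.inv_mult_group G.m_closed G.inv_inv)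

lemma central_mult: "central c \<Longrightarrow> central d \<Longrightarrow> central (c \<otimes>\<^bsub>G\<^esub> d)"
  unfolding central_def by (metis G.m_assoc G.m_closed)

lemma act_conj: "w \<in> words X \<Longrightarrow> y \<in> X \<Longrightarrow>
   e (act_word X op y w) = inv\<^bsub>G\<^esub> (cls X op w) \<otimes>\<^bsub>G\<^esub> e y \<otimes>\<^bsub>G\<^esub> cls X op w"
proof (induct w arbitrary: y rule: words_induct)
  case Nil then show ?case by (simp add: one[symmetric])
next
  case (T x w)
  have "e (act_word X op y ((x,True)#w)) = e (act_word X op (op y x) w)" by simp
  also have "\<dots> = inv\<^bsub>G\<^esub> (cls X op w) \<otimes>\<^bsub>G\<^esub> e (op y x) \<otimes>\<^bsub>G\<^esub> cls X op w"
    using T cl by simp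
  also have "\<dots> = inv\<^bsub>G\<^esub> (cls X op w) \<otimes>\<^bsub>G\<^esub> (inv\<^bsub>G\<^esub> e x \<otimes>\<^bsub>G\<^esub> e y \<otimes>\<^bsub>G\<^esub> e x) \<otimes>\<^bsub>G\<^esub> cls X op w"
    using T by (simp add: rel)
  also have "\<dots> = inv\<^bsub>G\<^esub> (e x \<otimes>\<^bsub>G\<^esub> cls X op w) \<otimes>\<^bsub>G\<^esub> e y \<otimes>\<^bsub>G\<^esub> (e x \<otimes>\<^bsub>G\<^esub> cls X op w)"
    using T by (simp add: G.m_assoc G.inv_mult_group)
  also have "\<dots> = inv\<^bsub>G\<^esub> (cls X op ((x,True)#w)) \<otimes>\<^bsub>G\<^esub> e y \<otimes>\<^bsub>G\<^esub> cls X op ((x,True)#w)"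
    using T by (simp add: cls_Cons[of _ w])
  finally show ?case .
next
  case (F x w)
  define y' where "y' = inv_into X (\<lambda>z. op z x) y"
  have y': "y' \<in> X" "op y' x = y" using F rinv_in rinv_op y'_def by auto
  have ey: "e y = inv\<^bsub>G\<^esub> e x \<otimes>\<^bsub>G\<^esub> e y' \<otimes>\<^bsub>G\<^esub> e x" using rel[of y' x] y' F by simp
  have ey': "e y' = e x \<otimes>\<^bsub>G\<^esub> e y \<otimes>\<^bsub>G\<^esub> inv\<^bsub>G\<^esub> e x"
    using y' F by (simp add: ey G.m_assoc)
  have "e (act_word X op y ((x,False)#w)) = e (act_word X op y' w)" by (simp add: y'_def)
  also have "\<dots> = inv\<^bsub>G\<^esub> (cls X op w) \<otimes>\<^bsub>G\<^esub> e y' \<otimes>\<^bsub>G\<^esub> cls X op w"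
    using F y' by simp
  also have "\<dots> = inv\<^bsub>G\<^esub> (inv\<^bsub>G\<^esub> e x \<otimes>\<^bsub>G\<^esub> cls X op w) \<otimes>\<^bsub>G\<^esub> e y \<otimes>\<^bsub>G\<^esub> (inv\<^bsub>G\<^esub> e x \<otimes>\<^bsub>G\<^esub> cls X op w)"
    using F y' by (simp add: ey' G.m_assoc G.inv_mult_group)
  also have "\<dots> = inv\<^bsub>G\<^esub> (cls X op ((x,False)#w)) \<otimes>\<^bsub>G\<^esub> e y \<otimes>\<^bsub>G\<^esub> cls X op ((x,False)#w)"
    using F by (simp add: cls_Cons[of _ w] cls_False)
  finally show ?case .
qed

lemma funpow_in: "z \<in> X \<Longrightarrow> w \<in> X \<Longrightarrow> ((\<lambda>v. op v z) ^^ n) w \<in> X"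
  by (induct n) (auto simp: cl)

lemma pow_conj: "z \<in> X \<Longrightarrow> w \<in> X \<Longrightarrow>
  inv\<^bsub>G\<^esub> (e z [^]\<^bsub>G\<^esub> n) \<otimes>\<^bsub>G\<^esub> e w \<otimes>\<^bsub>G\<^esub> e z [^]\<^bsub>G\<^esub> n = e (((\<lambda>v. op v z) ^^ n) w)"
proof (induct n)
  case 0 then show ?case by simp
next
  case (Suc n)
  have "inv\<^bsub>G\<^esub> (e z [^]\<^bsub>G\<^esub> Suc n) \<otimes>\<^bsub>G\<^esub> e w \<otimes>\<^bsub>G\<^esub> e z [^]\<^bsub>G\<^esub> Suc n
     = inv\<^bsub>G\<^esub> e z \<otimes>\<^bsub>G\<^esub> (inv\<^bsub>G\<^esub> (e z [^]\<^bsub>G\<^esub> n) \<otimes>\<^bsub>G\<^esub> e w \<otimes>\<^bsub>G\<^esub> e z [^]\<^bsub>G\<^esub> n) \<otimes>\<^bsub>G\<^esub> e z"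
    using Suc.prems by (simp add: G.m_assoc G.inv_mult_group)
  also have "\<dots> = inv\<^bsub>G\<^esub> e z \<otimes>\<^bsub>G\<^esub> e (((\<lambda>v. op v z) ^^ n) w) \<otimes>\<^bsub>G\<^esub> e z"
    using Suc by simp
  also have "\<dots> = e (((\<lambda>v. op v z) ^^ Suc n) w)"
    using Suc funpow_in[of z w n] by (simp add: rel)
  finally show ?case .
qed

lemma conj_pow: "g \<in> carrier G \<Longrightarrow> a \<in> carrier G \<Longrightarrow>
  (inv\<^bsub>G\<^esub> g \<otimes>\<^bsub>G\<^esub> a \<otimes>\<^bsub>G\<^esub> g) [^]\<^bsub>G\<^esub> (n::nat) = inv\<^bsub>G\<^esub> g \<otimes>\<^bsub>G\<^esub> a [^]\<^bsub>G\<^esub> n \<otimes>\<^bsub>G\<^esub> g"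
proof (induct n)
  case 0 then show ?case by simp
next
  case (Suc n)
  then show ?case by (simp add: G.m_assoc[symmetric]) (simp add: G.m_assoc)
qed

lemma carrier_rep: "g \<in> carrier G \<Longrightarrow> (SOME w. w \<in> g) \<in> words X \<and> g = cls X op (SOME w. w \<in> g)"
proof -
  assume "g \<in> carrier G"
  then obtain u where u: "u \<in> words X" "g = cls X op u" by (auto simp: carrier)
  then have "u \<in> g" by (simp add: mem_cls[OF cl] as_refl)
  then have r: "(SOME w. w \<in> g) \<in> g" by (rule someI)
  then have "as_eq X op u (SOME w. w \<in> g)" using u by (simp add: mem_cls[OF cl])
  then show ?thesis using u as_eq_words[OF cl] eq by blast
qed

end



locale covq =
  fixes Y :: "'a set" and opY :: "'a \<Rightarrow> 'a \<Rightarrow> 'a"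
    and Z :: "'b set" and opZ :: "'b \<Rightarrow> 'b \<Rightarrow> 'b"
    and p :: "'a \<Rightarrow> 'b"
  assumes cov: "quandle_covering Y opY Z opZ p"
begin

sublocale Y: asq Y opY using cov by (unfold_locales) (simp add: quandle_covering_def)
sublocale Z: asq Z opZ using cov by (unfold_locales) (simp add: quandle_covering_def)

lemma p_in: "y \<in> Y \<Longrightarrow> p y \<in> Z" using cov unfolding quandle_covering_def quandle_hom_def by blast
lemma p_op: "a \<in> Y \<Longrightarrow> b \<in> Y \<Longrightarrow> p (opY a b) = opZ (p a) (p b)"
  using cov unfolding quandle_covering_def quandle_hom_def by blast
lemma p_surj: "p ` Y = Z" using cov unfolding quandle_covering_def by blast
lemma covering: "a \<in> Y \<Longrightarrow> x \<in> Y \<Longrightarrow> y \<in> Y \<Longrightarrow> p x = p y \<Longrightarrow> opY a x = opY a y"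
  using cov unfolding quandle_covering_def by blast

definition pm :: "'a word \<Rightarrow> 'b word" where "pm w = map (\<lambda>(y, b). (p y, b)) w"
definition s :: "'b \<Rightarrow> 'a" where "s z = inv_into Y p z"
definition lift :: "'b word \<Rightarrow> 'a word" where "lift w = map (\<lambda>(z, b). (s z, b)) w"

lemma s_in: "z \<in> Z \<Longrightarrow> s z \<in> Y" by (metis inv_into_into p_surj s_def)
lemma p_s: "z \<in> Z \<Longrightarrow> p (s z) = z" by (metis f_inv_into_f p_surj s_def)

lemma pm_simps[simp]: "pm [] = []" "pm (u @ v) = pm u @ pm v" "pm ((y,b) # w) = (p y, b) # pm w"
  by (simp_all add: pm_def)
lemma lift_simps[simp]: "lift [] = []" "lift (u @ v) = lift u @ lift v" "lift ((z,b) # w) = (s z, b) # lift w"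
  by (simp_all add: lift_def)

lemma pm_words: "w \<in> words Y \<Longrightarrow> pm w \<in> words Z"
  by (auto simp: pm_def words_def p_in)
lemma lift_words: "w \<in> words Z \<Longrightarrow> lift w \<in> words Y"
  by (auto simp: lift_def words_def s_in)
lemma pm_lift: "w \<in> words Z \<Longrightarrow> pm (lift w) = w"
  by (induct w) (auto simp: p_s)

lemma as_eq_pm: "as_eq Y opY u v \<Longrightarrow> as_eq Z opZ (pm u) (pm v)"
proof (induct rule: as_eq.induct)
  case (as_refl w) then show ?case by (auto intro: as_eq.as_refl pm_words)
next
  case (as_sym u v) then show ?case by (auto intro: as_eq.as_sym)
next
  case (as_trans u v w) then show ?case by (auto intro: as_eq.as_trans)
next
  case (as_cancel u v x c)
  then show ?case using as_eq.as_cancel[of "pm u" Z "pm v" "p x" opZ c] by (simp add: pm_words p_in)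
next
  case (as_rel u v x y)
  then show ?case using as_eq.as_rel[of "pm u" Z "pm v" "p x" "p y" opZ] by (simp add: pm_words p_in p_op)
qed

abbreviation "ps \<equiv> as_induced Y opY Z opZ p"

lemma ps_def': "ps A = (\<Union>a\<in>A. cls Z opZ (pm a))"
  by (simp add: as_induced_def cls_def pm_def)

lemma ps_cls: "w \<in> words Y \<Longrightarrow> ps (cls Y opY w) = cls Z opZ (pm w)"
proof -
  assume w: "w \<in> words Y"
  have c: "\<And>a. a \<in> cls Y opY w \<Longrightarrow> cls Z opZ (pm a) = cls Z opZ (pm w)"
  proof -
    fix a assume "a \<in> cls Y opY w"
    then have a: "as_eq Y opY w a" by (simp add: mem_cls[OF Y.cl])
    then have aw: "a \<in> words Y" using as_eq_words[OF Y.cl] by blast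
    have "as_eq Z opZ (pm a) (pm w)" by (rule as_eq.as_sym[OF as_eq_pm[OF a]])
    then show "cls Z opZ (pm a) = cls Z opZ (pm w)"
      by (simp add: Z.eq pm_words aw w)
  qed
  have "w \<in> cls Y opY w" using w by (simp add: mem_cls[OF Y.cl] as_refl)
  moreover have "(\<Union>a\<in>cls Y opY w. cls Z opZ (pm a)) = (\<Union>a\<in>cls Y opY w. cls Z opZ (pm w))"
    using c by (rule SUP_cong[OF refl])
  ultimately show ?thesis unfolding ps_def' by auto
qed

lemma ps_hom: "ps \<in> hom Y.G Z.G"
proof (rule homI)
  fix x assume "x \<in> carrier Y.G"
  then show "ps x \<in> carrier Z.G" by (auto simp: Y.carrier ps_cls pm_words)
next
  fix x y assume "x \<in> carrier Y.G" "y \<in> carrier Y.G"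
  then show "ps (x \<otimes>\<^bsub>Y.G\<^esub> y) = ps x \<otimes>\<^bsub>Z.G\<^esub> ps y"
    by (auto simp: Y.carrier ps_cls pm_words Y.mult Z.mult)
qed

sublocale PH: group_hom Y.G Z.G ps
  by (unfold_locales) (rule ps_hom)

lemma ps_surj: "ps ` carrier Y.G = carrier Z.G"
proof (intro equalityI subsetI)
  fix x assume "x \<in> ps ` carrier Y.G" then show "x \<in> carrier Z.G" using ps_hom by (auto simp: hom_def)
next
  fix x assume "x \<in> carrier Z.G"
  then obtain w where w: "w \<in> words Z" "x = cls Z opZ w" by (auto simp: Z.carrier)
  then have "x = ps (cls Y opY (lift w))" by (simp add: ps_cls lift_words pm_lift)
  then show "x \<in> ps ` carrier Y.G" using w lift_words by auto
qed

lemma ps_e: "y \<in> Y \<Longrightarrow> ps (Y.e y) = Z.e (p y)"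
  using ps_cls[of "[(y,True)]"] by simp

end



context covq
begin

lemma cls3: "a \<in> words Y \<Longrightarrow> b \<in> words Y \<Longrightarrow> fst l \<in> Y \<Longrightarrow>
  cls Y opY (a @ [l] @ b) = cls Y opY a \<otimes>\<^bsub>Y.G\<^esub> cls Y opY [l] \<otimes>\<^bsub>Y.G\<^esub> cls Y opY b"
  by (simp add: Y.mult[symmetric] Y.G.m_assoc del: append.simps)

lemma swap_mid:
  assumes "a \<in> carrier Y.G" "b \<in> carrier Y.G" "c \<in> carrier Y.G" "d \<in> carrier Y.G"
    "b \<otimes>\<^bsub>Y.G\<^esub> c = c \<otimes>\<^bsub>Y.G\<^esub> b"
  shows "a \<otimes>\<^bsub>Y.G\<^esub> b \<otimes>\<^bsub>Y.G\<^esub> (c \<otimes>\<^bsub>Y.G\<^esub> d) = a \<otimes>\<^bsub>Y.G\<^esub> c \<otimes>\<^bsub>Y.G\<^esub> (b \<otimes>\<^bsub>Y.G\<^esub> d)"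
proof -
  have "a \<otimes>\<^bsub>Y.G\<^esub> b \<otimes>\<^bsub>Y.G\<^esub> (c \<otimes>\<^bsub>Y.G\<^esub> d) = a \<otimes>\<^bsub>Y.G\<^esub> (b \<otimes>\<^bsub>Y.G\<^esub> c) \<otimes>\<^bsub>Y.G\<^esub> d"
    using assms(1-4) by (simp add: Y.G.m_assoc)
  also have "\<dots> = a \<otimes>\<^bsub>Y.G\<^esub> (c \<otimes>\<^bsub>Y.G\<^esub> b) \<otimes>\<^bsub>Y.G\<^esub> d" using assms by simp
  also have "\<dots> = a \<otimes>\<^bsub>Y.G\<^esub> c \<otimes>\<^bsub>Y.G\<^esub> (b \<otimes>\<^bsub>Y.G\<^esub> d)" using assms(1-4) by (simp add: Y.G.m_assoc)
  finally show ?thesis .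
qed

lemma cls3': "a \<in> words Y \<Longrightarrow> b \<in> words Y \<Longrightarrow> m \<in> words Y \<Longrightarrow>
  cls Y opY (a @ m @ b) = cls Y opY a \<otimes>\<^bsub>Y.G\<^esub> cls Y opY m \<otimes>\<^bsub>Y.G\<^esub> cls Y opY b"
  by (simp add: Y.mult)

context
  fixes D
  assumes sg: "subgroup D Y.G"
    and Dc: "\<And>d. d \<in> D \<Longrightarrow> Y.central d"
    and hyp: "\<And>a b. a \<in> Y \<Longrightarrow> b \<in> Y \<Longrightarrow> p a = p b \<Longrightarrow> inv\<^bsub>Y.G\<^esub> Y.e a \<otimes>\<^bsub>Y.G\<^esub> Y.e b \<in> D"
begin

lemma D_carrier: "d \<in> D \<Longrightarrow> d \<in> carrier Y.G" using sg by (auto simp: subgroup_def)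

lemma comm: "d \<in> D \<Longrightarrow> g \<in> carrier Y.G \<Longrightarrow> d \<otimes>\<^bsub>Y.G\<^esub> g = g \<otimes>\<^bsub>Y.G\<^esub> d"
  using Dc by (auto simp: Y.central_def)

lemma lift_eq: "as_eq Z opZ u v \<Longrightarrow> \<exists>d\<in>D. cls Y opY (lift u) = cls Y opY (lift v) \<otimes>\<^bsub>Y.G\<^esub> d"
proof (induct rule: as_eq.induct)
  case (as_refl w)
  then show ?case using sg lift_words by (intro bexI[of _ "\<one>\<^bsub>Y.G\<^esub>"]) (auto simp: subgroup.one_closed)
next
  case (as_sym u v)
  then obtain d where d: "d \<in> D" "cls Y opY (lift u) = cls Y opY (lift v) \<otimes>\<^bsub>Y.G\<^esub> d" by blast
  have v: "lift v \<in> words Y" using as_sym(1) as_eq_words[OF Z.cl] lift_words by blast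
  have "cls Y opY (lift v) = cls Y opY (lift u) \<otimes>\<^bsub>Y.G\<^esub> inv\<^bsub>Y.G\<^esub> d"
    using d v D_carrier by (simp add: Y.G.m_assoc)
  then show ?case using d sg by (intro bexI[of _ "inv\<^bsub>Y.G\<^esub> d"]) (auto simp: subgroup.m_inv_closed)
next
  case (as_trans u v w)
  then obtain d1 d2 where d: "d1 \<in> D" "cls Y opY (lift u) = cls Y opY (lift v) \<otimes>\<^bsub>Y.G\<^esub> d1"
    "d2 \<in> D" "cls Y opY (lift v) = cls Y opY (lift w) \<otimes>\<^bsub>Y.G\<^esub> d2" by blast
  have w: "lift w \<in> words Y" using as_trans(3) as_eq_words[OF Z.cl] lift_words by blast
  have "cls Y opY (lift u) = cls Y opY (lift w) \<otimes>\<^bsub>Y.G\<^esub> (d2 \<otimes>\<^bsub>Y.G\<^esub> d1)"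
    using d w D_carrier by (simp add: Y.G.m_assoc)
  then show ?case using d sg by (intro bexI[of _ "d2 \<otimes>\<^bsub>Y.G\<^esub> d1"]) (auto simp: subgroup.m_closed)
next
  case (as_cancel u v x c)
  have "as_eq Y opY (lift u @ [(s x, c), (s x, \<not> c)] @ lift v) (lift u @ lift v)"
    using as_cancel by (intro as_eq.as_cancel) (auto simp: lift_words s_in)
  then have "cls Y opY (lift (u @ [(x, c), (x, \<not> c)] @ v)) = cls Y opY (lift (u @ v))"
    using as_cancel by (subst Y.eq) (auto simp: lift_words s_in)
  then show ?case using sg as_cancel lift_words
    by (intro bexI[of _ "\<one>\<^bsub>Y.G\<^esub>"]) (auto simp: subgroup.one_closed)
next
  case (as_rel u v x y)
  define a where "a = opY (s x) (s y)"
  define b where "b = s (opZ x y)"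
  have ab: "a \<in> Y" "b \<in> Y" "p a = p b"
    using as_rel Y.cl Z.cl s_in p_s p_op by (auto simp: a_def b_def)
  define \<delta> where "\<delta> = inv\<^bsub>Y.G\<^esub> Y.e a \<otimes>\<^bsub>Y.G\<^esub> Y.e b"
  have \<delta>: "\<delta> \<in> D" using hyp ab by (simp add: \<delta>_def)
  have eb: "Y.e b = Y.e a \<otimes>\<^bsub>Y.G\<^esub> \<delta>" using ab by (simp add: \<delta>_def)
  have U: "lift u \<in> words Y" and V: "lift v \<in> words Y" using as_rel lift_words by auto
  have ea: "Y.e a = cls Y opY [(s y, False), (s x, True), (s y, True)]"
  proof -
    have "as_eq Y opY ([] @ [(a, True)] @ []) ([] @ [(s y, False), (s x, True), (s y, True)] @ [])"
      unfolding a_def using as_rel s_in by (intro as_eq.as_rel) auto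
    then show ?thesis using as_rel s_in ab by (subst Y.eq) auto
  qed
  have "cls Y opY (lift (u @ [(opZ x y, True)] @ v)) = cls Y opY (lift u) \<otimes>\<^bsub>Y.G\<^esub> Y.e b \<otimes>\<^bsub>Y.G\<^esub> cls Y opY (lift v)"
    using U V ab by (simp add: cls3 b_def del: append.simps)
  also have "\<dots> = cls Y opY (lift u) \<otimes>\<^bsub>Y.G\<^esub> Y.e a \<otimes>\<^bsub>Y.G\<^esub> cls Y opY (lift v) \<otimes>\<^bsub>Y.G\<^esub> \<delta>"
    using U V ab \<delta> D_carrier comm[OF \<delta>, of "cls Y opY (lift v)"] by (simp add: eb Y.G.m_assoc)
  also have "cls Y opY (lift u) \<otimes>\<^bsub>Y.G\<^esub> Y.e a \<otimes>\<^bsub>Y.G\<^esub> cls Y opY (lift v) = cls Y opY (lift (u @ [(y, False), (x, True), (y, True)] @ v))"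
    using U V as_rel s_in by (simp add: ea cls3' del: append.simps)
  finally show ?case using \<delta> by blast
qed

lemma words_lift: "w \<in> words Y \<Longrightarrow> \<exists>d\<in>D. cls Y opY w = cls Y opY (lift (pm w)) \<otimes>\<^bsub>Y.G\<^esub> d"
proof (induct rule: Y.words_induct)
  case Nil then show ?case using sg by (intro bexI[of _ "\<one>\<^bsub>Y.G\<^esub>"]) (auto simp: subgroup.one_closed)
next
  case (T y w)
  then obtain d where d: "d \<in> D" "cls Y opY w = cls Y opY (lift (pm w)) \<otimes>\<^bsub>Y.G\<^esub> d" by blast
  define y' where "y' = s (p y)"
  have y': "y' \<in> Y" "p y' = p y" using T p_in s_in p_s by (auto simp: y'_def)
  define \<delta> where "\<delta> = inv\<^bsub>Y.G\<^esub> Y.e y' \<otimes>\<^bsub>Y.G\<^esub> Y.e y"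
  have \<delta>: "\<delta> \<in> D" using hyp y' T by (simp add: \<delta>_def)
  have ey: "Y.e y = Y.e y' \<otimes>\<^bsub>Y.G\<^esub> \<delta>" using y' T by (simp add: \<delta>_def)
  have L: "lift (pm w) \<in> words Y" using T lift_words pm_words by auto
  have "cls Y opY ((y,True) # w) = Y.e y \<otimes>\<^bsub>Y.G\<^esub> cls Y opY w" using T by (simp add: Y.cls_Cons[of _ w])
  also have "\<dots> = Y.e y' \<otimes>\<^bsub>Y.G\<^esub> cls Y opY (lift (pm w)) \<otimes>\<^bsub>Y.G\<^esub> (\<delta> \<otimes>\<^bsub>Y.G\<^esub> d)"
    using d y' \<delta> L D_carrier comm[OF \<delta>, of "cls Y opY (lift (pm w))"] by (simp add: ey swap_mid)
  also have "Y.e y' \<otimes>\<^bsub>Y.G\<^esub> cls Y opY (lift (pm w)) = cls Y opY (lift (pm ((y,True) # w)))"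
    using y' L by (simp add: Y.cls_Cons[of _ "lift (pm w)"] y'_def)
  finally show ?case using \<delta> d sg by (auto simp: subgroup.m_closed)
next
  case (F y w)
  then obtain d where d: "d \<in> D" "cls Y opY w = cls Y opY (lift (pm w)) \<otimes>\<^bsub>Y.G\<^esub> d" by blast
  define y' where "y' = s (p y)"
  have y': "y' \<in> Y" "p y' = p y" using F p_in s_in p_s by (auto simp: y'_def)
  define \<delta> where "\<delta> = inv\<^bsub>Y.G\<^esub> Y.e y \<otimes>\<^bsub>Y.G\<^esub> Y.e y'"
  have \<delta>: "\<delta> \<in> D" using hyp y' F by (simp add: \<delta>_def)
  have ey: "inv\<^bsub>Y.G\<^esub> Y.e y = inv\<^bsub>Y.G\<^esub> Y.e y' \<otimes>\<^bsub>Y.G\<^esub> \<delta>"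
  proof -
    have "inv\<^bsub>Y.G\<^esub> Y.e y = \<delta> \<otimes>\<^bsub>Y.G\<^esub> inv\<^bsub>Y.G\<^esub> Y.e y'" using y' F by (simp add: \<delta>_def Y.G.m_assoc)
    then show ?thesis using comm[OF \<delta>, of "inv\<^bsub>Y.G\<^esub> Y.e y'"] y' by simp
  qed
  have L: "lift (pm w) \<in> words Y" using F lift_words pm_words by auto
  have "cls Y opY ((y,False) # w) = inv\<^bsub>Y.G\<^esub> Y.e y \<otimes>\<^bsub>Y.G\<^esub> cls Y opY w"
    using F by (simp add: Y.cls_Cons[of _ w] Y.cls_False)
  also have "\<dots> = inv\<^bsub>Y.G\<^esub> Y.e y' \<otimes>\<^bsub>Y.G\<^esub> cls Y opY (lift (pm w)) \<otimes>\<^bsub>Y.G\<^esub> (\<delta> \<otimes>\<^bsub>Y.G\<^esub> d)"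
    using d y' \<delta> L D_carrier comm[OF \<delta>, of "cls Y opY (lift (pm w))"] by (simp add: ey swap_mid)
  also have "inv\<^bsub>Y.G\<^esub> Y.e y' \<otimes>\<^bsub>Y.G\<^esub> cls Y opY (lift (pm w)) = cls Y opY (lift (pm ((y,False) # w)))"
    using y' L by (simp add: Y.cls_Cons[of _ "lift (pm w)"] Y.cls_False y'_def)
  finally show ?case using \<delta> d sg by (auto simp: subgroup.m_closed)
qed

lemma kernel_D: "k \<in> kernel Y.G Z.G ps \<Longrightarrow> k \<in> D"
proof -
  assume k: "k \<in> kernel Y.G Z.G ps"
  then obtain w where w: "w \<in> words Y" "k = cls Y opY w" by (auto simp: kernel_def Y.carrier)
  then have "cls Z opZ (pm w) = cls Z opZ []" using k by (simp add: kernel_def ps_cls Z.one)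
  then have "as_eq Z opZ (pm w) []" using w pm_words by (subst (asm) Z.eq) auto
  then obtain d1 where d1: "d1 \<in> D" "cls Y opY (lift (pm w)) = cls Y opY (lift []) \<otimes>\<^bsub>Y.G\<^esub> d1"
    using lift_eq by blast
  obtain d2 where d2: "d2 \<in> D" "cls Y opY w = cls Y opY (lift (pm w)) \<otimes>\<^bsub>Y.G\<^esub> d2"
    using words_lift w by blast
  have "k = d1 \<otimes>\<^bsub>Y.G\<^esub> d2" using w d1 d2 D_carrier by (simp add: Y.one[symmetric])
  then show ?thesis using d1 d2 sg by (simp add: subgroup.m_closed)
qed

end
end



context covq
begin

lemma hyp1:
  assumes a: "a \<in> Y" and b: "b \<in> Y" and pab: "p a = p b"
  shows "Y.central (inv\<^bsub>Y.G\<^esub> Y.e a \<otimes>\<^bsub>Y.G\<^esub> Y.e b)"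
proof (rule Y.central_gen)
  show "inv\<^bsub>Y.G\<^esub> Y.e a \<otimes>\<^bsub>Y.G\<^esub> Y.e b \<in> carrier Y.G" using a b by simp
next
  fix x assume x: "x \<in> Y"
  define x' where "x' = inv_into Y (\<lambda>z. opY z a) x"
  have x': "x' \<in> Y" "opY x' a = x" using Y.rinv_in Y.rinv_op a x by (auto simp: x'_def)
  have x'b: "opY x' b = x" using covering[OF x'(1) a b pab] x' by simp
  have ex1: "Y.e x = inv\<^bsub>Y.G\<^esub> Y.e a \<otimes>\<^bsub>Y.G\<^esub> Y.e x' \<otimes>\<^bsub>Y.G\<^esub> Y.e a"
    using Y.rel[of x' a] x' a by simp
  have ex2: "Y.e x = inv\<^bsub>Y.G\<^esub> Y.e b \<otimes>\<^bsub>Y.G\<^esub> Y.e x' \<otimes>\<^bsub>Y.G\<^esub> Y.e b"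
    using Y.rel[of x' b] x'b x' b by simp
  have "inv\<^bsub>Y.G\<^esub> Y.e a \<otimes>\<^bsub>Y.G\<^esub> Y.e b \<otimes>\<^bsub>Y.G\<^esub> Y.e x = inv\<^bsub>Y.G\<^esub> Y.e a \<otimes>\<^bsub>Y.G\<^esub> Y.e x' \<otimes>\<^bsub>Y.G\<^esub> Y.e b"
    using a b x' by (subst ex2) (simp add: Y.G.m_assoc)
  also have "\<dots> = Y.e x \<otimes>\<^bsub>Y.G\<^esub> (inv\<^bsub>Y.G\<^esub> Y.e a \<otimes>\<^bsub>Y.G\<^esub> Y.e b)"
    using a b x' by (subst ex1) (simp add: Y.G.m_assoc)
  finally show "inv\<^bsub>Y.G\<^esub> Y.e a \<otimes>\<^bsub>Y.G\<^esub> Y.e b \<otimes>\<^bsub>Y.G\<^esub> Y.e x = Y.e x \<otimes>\<^bsub>Y.G\<^esub> (inv\<^bsub>Y.G\<^esub> Y.e a \<otimes>\<^bsub>Y.G\<^esub> Y.e b)" .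
qed

lemma sg_center: "subgroup {c. Y.central c} Y.G"
proof (rule Y.G.subgroupI)
  show "{c. Y.central c} \<subseteq> carrier Y.G" by (auto simp: Y.central_def)
  show "{c. Y.central c} \<noteq> {}" using Y.central_gen[of "\<one>\<^bsub>Y.G\<^esub>"] by auto
qed (auto intro: Y.central_inv Y.central_mult)

lemma kernel_central: "k \<in> kernel Y.G Z.G ps \<Longrightarrow> Y.central k"
proof -
  assume k: "k \<in> kernel Y.G Z.G ps"
  have "k \<in> {c. Y.central c}"
    by (rule kernel_D[OF sg_center]) (use hyp1 k in auto)
  then show ?thesis by simp
qed

theorem part1: "central_extension Y.G Z.G ps"
  unfolding central_extension_def
proof (intro conjI ballI)
  fix k g assume "k \<in> kernel Y.G Z.G ps" "g \<in> carrier Y.G"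
  then show "k \<otimes>\<^bsub>Y.G\<^esub> g = g \<otimes>\<^bsub>Y.G\<^esub> k" using kernel_central unfolding Y.central_def by blast
qed (use Y.G.group_axioms Z.G.group_axioms ps_hom ps_surj in auto)

end



context asq
begin

lemma central_carrier: "central c \<Longrightarrow> c \<in> carrier G" by (simp add: central_def)

definition comm :: "'a word set \<Rightarrow> 'a word set \<Rightarrow> 'a word set" where
  "comm c h = c \<otimes>\<^bsub>G\<^esub> h \<otimes>\<^bsub>G\<^esub> inv\<^bsub>G\<^esub> c \<otimes>\<^bsub>G\<^esub> inv\<^bsub>G\<^esub> h"

lemma comm_carrier[simp]: "c \<in> carrier G \<Longrightarrow> h \<in> carrier G \<Longrightarrow> comm c h \<in> carrier G"
  by (simp add: comm_def)

lemma comm_mult: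
  assumes c: "c \<in> carrier G" and a: "a \<in> carrier G" and b: "b \<in> carrier G" and cb: "central (comm c b)"
  shows "comm c (a \<otimes>\<^bsub>G\<^esub> b) = comm c a \<otimes>\<^bsub>G\<^esub> comm c b"
proof -
  have "comm c a \<otimes>\<^bsub>G\<^esub> comm c b = c \<otimes>\<^bsub>G\<^esub> a \<otimes>\<^bsub>G\<^esub> inv\<^bsub>G\<^esub> c \<otimes>\<^bsub>G\<^esub> (inv\<^bsub>G\<^esub> a \<otimes>\<^bsub>G\<^esub> comm c b)"
    using assms by (simp add: comm_def G.m_assoc)
  also have "inv\<^bsub>G\<^esub> a \<otimes>\<^bsub>G\<^esub> comm c b = comm c b \<otimes>\<^bsub>G\<^esub> inv\<^bsub>G\<^esub> a"
    using cb a by (simp add: central_def)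
  also have "c \<otimes>\<^bsub>G\<^esub> a \<otimes>\<^bsub>G\<^esub> inv\<^bsub>G\<^esub> c \<otimes>\<^bsub>G\<^esub> (comm c b \<otimes>\<^bsub>G\<^esub> inv\<^bsub>G\<^esub> a) = comm c (a \<otimes>\<^bsub>G\<^esub> b)"
    using assms by (simp add: comm_def G.m_assoc G.inv_mult_group)
  finally show ?thesis by simp
qed

lemma comm_one_imp: "c \<in> carrier G \<Longrightarrow> h \<in> carrier G \<Longrightarrow> comm c h = \<one>\<^bsub>G\<^esub> \<Longrightarrow> c \<otimes>\<^bsub>G\<^esub> h = h \<otimes>\<^bsub>G\<^esub> c"
proof -
  assume c: "c \<in> carrier G" and h: "h \<in> carrier G" and e: "comm c h = \<one>\<^bsub>G\<^esub>"
  have "c \<otimes>\<^bsub>G\<^esub> h = comm c h \<otimes>\<^bsub>G\<^esub> (h \<otimes>\<^bsub>G\<^esub> c)"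
    using c h by (simp add: comm_def G.m_assoc)
  then show ?thesis using e c h by simp
qed

lemma comm_self: "c \<in> carrier G \<Longrightarrow> c \<otimes>\<^bsub>G\<^esub> h = h \<otimes>\<^bsub>G\<^esub> c \<Longrightarrow> h \<in> carrier G \<Longrightarrow> comm c h = \<one>\<^bsub>G\<^esub>"
  by (simp add: comm_def G.m_assoc)

lemma conn_conj:
  assumes conn: "quandle_connected X op" and x: "x \<in> X" and y: "y \<in> X"
  shows "\<exists>g\<in>carrier G. e y = inv\<^bsub>G\<^esub> g \<otimes>\<^bsub>G\<^esub> e x \<otimes>\<^bsub>G\<^esub> g"
proof -
  obtain g where g: "g \<in> carrier G" "as_act X op x g = y" using conn x y unfolding quandle_connected_def by blast
  define r where "r = (SOME w. w \<in> g)"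
  have r: "r \<in> words X" "g = cls X op r" using carrier_rep[OF g(1)] r_def by auto
  have "y = act_word X op x r" using g(2) by (simp add: as_act_def r_def)
  then show ?thesis using act_conj[OF r(1) x] r g(1) by auto
qed

end

context covq
begin

context
  fixes t :: nat
  assumes tpos: "t > 0"
    and tZ: "\<And>x y. x \<in> Z \<Longrightarrow> y \<in> Z \<Longrightarrow> ((\<lambda>z. opZ z y) ^^ t) x = x"
    and connY: "quandle_connected Y opY"
begin

lemma Zpow_central: "z \<in> Z \<Longrightarrow> Z.central (Z.e z [^]\<^bsub>Z.G\<^esub> t)"
proof (rule Z.central_gen)
  fix w assume z: "z \<in> Z" and w: "w \<in> Z"
  have i: "inv\<^bsub>Z.G\<^esub> (Z.e z [^]\<^bsub>Z.G\<^esub> t) \<otimes>\<^bsub>Z.G\<^esub> Z.e w \<otimes>\<^bsub>Z.G\<^esub> Z.e z [^]\<^bsub>Z.G\<^esub> t = Z.e w"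
    using Z.pow_conj[OF z w, of t] tZ[OF w z] by simp
  have "Z.e w \<otimes>\<^bsub>Z.G\<^esub> Z.e z [^]\<^bsub>Z.G\<^esub> t = Z.e z [^]\<^bsub>Z.G\<^esub> t \<otimes>\<^bsub>Z.G\<^esub> (inv\<^bsub>Z.G\<^esub> (Z.e z [^]\<^bsub>Z.G\<^esub> t) \<otimes>\<^bsub>Z.G\<^esub> Z.e w \<otimes>\<^bsub>Z.G\<^esub> Z.e z [^]\<^bsub>Z.G\<^esub> t)"
    using z w by (simp add: Z.G.m_assoc)
  then show "Z.e z [^]\<^bsub>Z.G\<^esub> t \<otimes>\<^bsub>Z.G\<^esub> Z.e w = Z.e w \<otimes>\<^bsub>Z.G\<^esub> Z.e z [^]\<^bsub>Z.G\<^esub> t"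
    using i by simp
qed (simp)

lemma comm_kernel:
  assumes x: "x \<in> Y" and h: "h \<in> carrier Y.G"
  shows "Y.comm (Y.e x [^]\<^bsub>Y.G\<^esub> t) h \<in> kernel Y.G Z.G ps"
proof -
  define C where "C = Z.e (p x) [^]\<^bsub>Z.G\<^esub> t"
  have psc: "ps (Y.e x [^]\<^bsub>Y.G\<^esub> t) = C" using x by (simp add: PH.hom_nat_pow ps_e C_def)
  have Cc: "Z.central C" using Zpow_central p_in x by (simp add: C_def)
  have H: "ps h \<in> carrier Z.G" using h by simp
  have C: "C \<in> carrier Z.G" using Cc by (simp add: Z.central_def)
  have "ps (Y.comm (Y.e x [^]\<^bsub>Y.G\<^esub> t) h) = Z.comm C (ps h)"
    using x h by (simp add: Y.comm_def Z.comm_def psc)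
  also have "\<dots> = \<one>\<^bsub>Z.G\<^esub>" using Cc H C by (intro Z.comm_self) (auto simp: Z.central_def)
  finally show ?thesis using x h by (simp add: kernel_def)
qed

lemma Ypow_central: "x \<in> Y \<Longrightarrow> Y.central (Y.e x [^]\<^bsub>Y.G\<^esub> t)"
proof (rule Y.central_gen)
  fix w assume x: "x \<in> Y" and w: "w \<in> Y"
  define c where "c = Y.e x [^]\<^bsub>Y.G\<^esub> t"
  have c: "c \<in> carrier Y.G" using x by (simp add: c_def)
  have cen: "\<And>h. h \<in> carrier Y.G \<Longrightarrow> Y.central (Y.comm c h)"
    using comm_kernel kernel_central x by (simp add: c_def)
  obtain g where g: "g \<in> carrier Y.G" "Y.e w = inv\<^bsub>Y.G\<^esub> g \<otimes>\<^bsub>Y.G\<^esub> Y.e x \<otimes>\<^bsub>Y.G\<^esub> g"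
    using Y.conn_conj[OF connY x w] by blast
  have cx: "Y.comm c (Y.e x) = \<one>\<^bsub>Y.G\<^esub>"
    using x c by (intro Y.comm_self) (auto simp: c_def Y.G.nat_pow_Suc2[symmetric] simp del: nat_pow_Suc)
  have ig: "Y.comm c (inv\<^bsub>Y.G\<^esub> g) \<otimes>\<^bsub>Y.G\<^esub> Y.comm c g = \<one>\<^bsub>Y.G\<^esub>"
    using Y.comm_mult[OF c _ g(1) cen[OF g(1)], of "inv\<^bsub>Y.G\<^esub> g"] g c
    by (simp add: Y.comm_def)
  have "Y.comm c (Y.e w) = Y.comm c (inv\<^bsub>Y.G\<^esub> g \<otimes>\<^bsub>Y.G\<^esub> Y.e x) \<otimes>\<^bsub>Y.G\<^esub> Y.comm c g"
    using g c x cen by (simp add: Y.comm_mult)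
  also have "\<dots> = Y.comm c (inv\<^bsub>Y.G\<^esub> g) \<otimes>\<^bsub>Y.G\<^esub> Y.comm c g"
    using Y.comm_mult[OF c Y.G.inv_closed[OF g(1)] Y.e_carrier[OF x] cen[OF Y.e_carrier[OF x]]] cx g x c by simp
  finally have "Y.comm c (Y.e w) = \<one>\<^bsub>Y.G\<^esub>" using ig by simp
  then show "c \<otimes>\<^bsub>Y.G\<^esub> Y.e w = Y.e w \<otimes>\<^bsub>Y.G\<^esub> c" using c w by (intro Y.comm_one_imp) auto
qed (simp)

lemma hyp2:
  assumes a: "a \<in> Y" and b: "b \<in> Y" and pab: "p a = p b"
  shows "(inv\<^bsub>Y.G\<^esub> Y.e a \<otimes>\<^bsub>Y.G\<^esub> Y.e b) [^]\<^bsub>Y.G\<^esub> t = \<one>\<^bsub>Y.G\<^esub>"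
proof -
  define \<delta> where "\<delta> = inv\<^bsub>Y.G\<^esub> Y.e a \<otimes>\<^bsub>Y.G\<^esub> Y.e b"
  have dc: "Y.central \<delta>" using hyp1[OF a b pab] by (simp add: \<delta>_def)
  have d: "\<delta> \<in> carrier Y.G" using a b by (simp add: \<delta>_def)
  have eb: "Y.e b = Y.e a \<otimes>\<^bsub>Y.G\<^esub> \<delta>" using a b by (simp add: \<delta>_def)
  obtain g where g: "g \<in> carrier Y.G" "Y.e b = inv\<^bsub>Y.G\<^esub> g \<otimes>\<^bsub>Y.G\<^esub> Y.e a \<otimes>\<^bsub>Y.G\<^esub> g"
    using Y.conn_conj[OF connY a b] by blast
  have ac: "Y.central (Y.e a [^]\<^bsub>Y.G\<^esub> t)" using Ypow_central a by simp
  have "Y.e b [^]\<^bsub>Y.G\<^esub> t = inv\<^bsub>Y.G\<^esub> g \<otimes>\<^bsub>Y.G\<^esub> Y.e a [^]\<^bsub>Y.G\<^esub> t \<otimes>\<^bsub>Y.G\<^esub> g"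
    using g a by (simp add: Y.conj_pow)
  also have "\<dots> = inv\<^bsub>Y.G\<^esub> g \<otimes>\<^bsub>Y.G\<^esub> (g \<otimes>\<^bsub>Y.G\<^esub> Y.e a [^]\<^bsub>Y.G\<^esub> t)"
    using ac g a by (simp add: Y.central_def Y.G.m_assoc)
  also have "\<dots> = Y.e a [^]\<^bsub>Y.G\<^esub> t" using g a by simp
  finally have 1: "Y.e b [^]\<^bsub>Y.G\<^esub> t = Y.e a [^]\<^bsub>Y.G\<^esub> t" .
  have "Y.e b [^]\<^bsub>Y.G\<^esub> t = Y.e a [^]\<^bsub>Y.G\<^esub> t \<otimes>\<^bsub>Y.G\<^esub> \<delta> [^]\<^bsub>Y.G\<^esub> t"
    unfolding eb using dc a d by (intro Y.G.pow_mult_distrib) (auto simp: Y.central_def)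
  then show ?thesis using 1 a d by (simp add: \<delta>_def[symmetric])
qed

lemma sg2: "subgroup {c. Y.central c \<and> c [^]\<^bsub>Y.G\<^esub> t = \<one>\<^bsub>Y.G\<^esub>} Y.G"
proof (rule Y.G.subgroupI)
  show "{c. Y.central c \<and> c [^]\<^bsub>Y.G\<^esub> t = \<one>\<^bsub>Y.G\<^esub>} \<subseteq> carrier Y.G"
    using Y.central_carrier by blast
  have "Y.central \<one>\<^bsub>Y.G\<^esub>" by (rule Y.central_gen) simp_all
  then have "\<one>\<^bsub>Y.G\<^esub> \<in> {c. Y.central c \<and> c [^]\<^bsub>Y.G\<^esub> t = \<one>\<^bsub>Y.G\<^esub>}" by simp
  then show "{c. Y.central c \<and> c [^]\<^bsub>Y.G\<^esub> t = \<one>\<^bsub>Y.G\<^esub>} \<noteq> {}" by blast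
next
  fix a assume "a \<in> {c. Y.central c \<and> c [^]\<^bsub>Y.G\<^esub> t = \<one>\<^bsub>Y.G\<^esub>}"
  then have ac: "Y.central a" and ap: "a [^]\<^bsub>Y.G\<^esub> t = \<one>\<^bsub>Y.G\<^esub>" by simp_all
  have "a \<in> carrier Y.G" using ac by (rule Y.central_carrier)
  then have "inv\<^bsub>Y.G\<^esub> a [^]\<^bsub>Y.G\<^esub> t = inv\<^bsub>Y.G\<^esub> (a [^]\<^bsub>Y.G\<^esub> t)" by (rule Y.G.nat_pow_inv)
  then have "inv\<^bsub>Y.G\<^esub> a [^]\<^bsub>Y.G\<^esub> t = \<one>\<^bsub>Y.G\<^esub>" using ap by (simp only: Y.G.inv_one)
  then show "inv\<^bsub>Y.G\<^esub> a \<in> {c. Y.central c \<and> c [^]\<^bsub>Y.G\<^esub> t = \<one>\<^bsub>Y.G\<^esub>}"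
    using Y.central_inv[OF ac] by simp
next
  fix a b assume "a \<in> {c. Y.central c \<and> c [^]\<^bsub>Y.G\<^esub> t = \<one>\<^bsub>Y.G\<^esub>}"
    and "b \<in> {c. Y.central c \<and> c [^]\<^bsub>Y.G\<^esub> t = \<one>\<^bsub>Y.G\<^esub>}"
  then have ac: "Y.central a" and ap: "a [^]\<^bsub>Y.G\<^esub> t = \<one>\<^bsub>Y.G\<^esub>"
    and bc: "Y.central b" and bp: "b [^]\<^bsub>Y.G\<^esub> t = \<one>\<^bsub>Y.G\<^esub>" by simp_all
  have A: "a \<in> carrier Y.G" and B: "b \<in> carrier Y.G" using ac bc by (simp_all add: Y.central_carrier)
  have ab: "a \<otimes>\<^bsub>Y.G\<^esub> b = b \<otimes>\<^bsub>Y.G\<^esub> a" using ac B unfolding Y.central_def by blast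
  have "(a \<otimes>\<^bsub>Y.G\<^esub> b) [^]\<^bsub>Y.G\<^esub> t = a [^]\<^bsub>Y.G\<^esub> t \<otimes>\<^bsub>Y.G\<^esub> b [^]\<^bsub>Y.G\<^esub> t"
    by (rule Y.G.pow_mult_distrib[OF ab A B])
  then have "(a \<otimes>\<^bsub>Y.G\<^esub> b) [^]\<^bsub>Y.G\<^esub> t = \<one>\<^bsub>Y.G\<^esub>" using ap bp by simp
  then show "a \<otimes>\<^bsub>Y.G\<^esub> b \<in> {c. Y.central c \<and> c [^]\<^bsub>Y.G\<^esub> t = \<one>\<^bsub>Y.G\<^esub>}"
    using Y.central_mult[OF ac bc] by simp
qed

lemma part2: "k \<in> kernel Y.G Z.G ps \<Longrightarrow> k [^]\<^bsub>Y.G\<^esub> t = \<one>\<^bsub>Y.G\<^esub>"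
proof -
  assume k: "k \<in> kernel Y.G Z.G ps"
  have "k \<in> {c. Y.central c \<and> c [^]\<^bsub>Y.G\<^esub> t = \<one>\<^bsub>Y.G\<^esub>}"
    by (rule kernel_D[OF sg2]) (use hyp1 hyp2 k in auto)
  then show ?thesis by simp
qed

end
end

theorem proposition5p1:
  fixes Y :: "'a set" and opY :: "'a \<Rightarrow> 'a \<Rightarrow> 'a"
    and Z :: "'b set" and opZ :: "'b \<Rightarrow> 'b \<Rightarrow> 'b"
    and p :: "'a \<Rightarrow> 'b"
  assumes cov: "quandle_covering Y opY Z opZ p"
  shows "central_extension (As Y opY) (As Z opZ) (as_induced Y opY Z opZ p) \<and>
         (quandle_connected Y opY \<and> quandle_connected Z opZ \<and> has_finite_type Z opZ \<longrightarrow>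
          (\<forall>k\<in>kernel (As Y opY) (As Z opZ) (as_induced Y opY Z opZ p).
            k [^]\<^bsub>As Y opY\<^esub> quandle_type Z opZ = \<one>\<^bsub>As Y opY\<^esub>))"
proof -
  interpret covq Y opY Z opZ p by unfold_locales (rule cov)
  have P1: "central_extension (As Y opY) (As Z opZ) (as_induced Y opY Z opZ p)" by (rule part1)
  have P2: "\<forall>k\<in>kernel (As Y opY) (As Z opZ) (as_induced Y opY Z opZ p).
            k [^]\<^bsub>As Y opY\<^esub> quandle_type Z opZ = \<one>\<^bsub>As Y opY\<^esub>"
    if conn: "quandle_connected Y opY" and ft: "has_finite_type Z opZ"
  proof -
    let ?P = "\<lambda>N. N > 0 \<and> (\<forall>x\<in>Z. \<forall>y\<in>Z. ((\<lambda>z. opZ z y) ^^ N) x = x)"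
    have ex: "\<exists>N. ?P N" using ft by (auto simp: has_finite_type_def)
    have "?P (quandle_type Z opZ)" unfolding quandle_type_def by (rule LeastI_ex[OF ex])
    then have tp: "quandle_type Z opZ > 0"
      and tz: "\<And>x y. x \<in> Z \<Longrightarrow> y \<in> Z \<Longrightarrow> ((\<lambda>z. opZ z y) ^^ quandle_type Z opZ) x = x" by auto
    show ?thesis using part2[OF tp tz conn] by blast
  qed
  show ?thesis using P1 P2 by blast
qed

end
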